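(* Let $G$ be a countable group, and let $X$ be a proper metric space equipped with a $G$-action by isometries. Assume that there exist a compact metrizable $G$-space $K$ that does not carry any $G$-invariant probability measure, and a $G$-invariant Borel subset $K^*\subseteq K$ which contains a Borel subset homeomorphic to a Cantor set. Assume in addition that for every sequence $(g_n)_{n\in\mathbb N}$ in $G$ that escapes every compact subspace of $X$, there exist a subsequence $(g_{\sigma(n)})_{n\in\mathbb N}$ and points $\xi^-,\xi^+\in K$ such that for all $\xi\in K^*\setminus\{\xi^-\}$, the sequence $(g_{\sigma(n)}\xi)_{n\in\mathbb N}$ converges to $\xi^+$. Then the $G$-action on $X$ is properly proximal.
   Context: A sequence $(g_n)$ in $G$ escapes every compact subspace of $X$ if for some (equivalently any) $x\in X$, $(g_nx)$ eventually leaves every compact subset. The $G$-action on $X$ is properly proximal if there exist finitely many compact metrizable $G$-spaces $K_1,\dots,K_\ell$, none carrying a $G$-invariant probability measure, and diffuse probability measures $\eta_i$ on $K_i$, such that for every sequence $(g_n)$ escaping every compact subspace of $X$, there exist $i$ and a subsequence $(g_{\sigma(n)})$ with $g_{\sigma(n)}h\eta_i-g_{\sigma(n)}\eta_i\to0$ weak-$*$ for every $h\in G$. *)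

theory Defs
  imports "HOL-Analysis.Analysis" "HOL-Probability.Probability" "HOL-Algebra.Group_Action"
begin

definition proper_metric_space :: "'x::metric_space itself \<Rightarrow> bool" where
  "proper_metric_space _ \<longleftrightarrow> (\<forall>(x::'x) r. compact (cball x r))"

definition isometric_action :: "('g, 'b) monoid_scheme \<Rightarrow> ('g \<Rightarrow> 'x::metric_space \<Rightarrow> 'x) \<Rightarrow> bool" where
  "isometric_action G act \<longleftrightarrow> group_action G UNIV act \<and>
     (\<forall>g\<in>carrier G. \<forall>x y. dist (act g x) (act g y) = dist x y)"

text \<open>A compact metrizable G-space: a compact subset K of a metric space with a continuous
  G-action (G is countable and discrete, so continuity means each act g is continuous).\<close>
definition compact_G_space :: "('g, 'b) monoid_scheme \<Rightarrow> 'k::metric_space set \<Rightarrow> ('g \<Rightarrow> 'k \<Rightarrow> 'k) \<Rightarrow> bool" where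
  "compact_G_space G K act \<longleftrightarrow> compact K \<and> group_action G K act \<and>
     (\<forall>g\<in>carrier G. continuous_on K (act g))"

definition borel_prob_on :: "'k::topological_space set \<Rightarrow> 'k measure \<Rightarrow> bool" where
  "borel_prob_on K \<mu> \<longleftrightarrow> prob_space \<mu> \<and> space \<mu> = K \<and> sets \<mu> = sets (restrict_space borel K)"

definition push :: "('g \<Rightarrow> 'k \<Rightarrow> 'k) \<Rightarrow> 'g \<Rightarrow> 'k measure \<Rightarrow> 'k measure" where
  "push act g \<mu> = distr \<mu> \<mu> (act g)"

definition has_invariant_prob :: "('g, 'b) monoid_scheme \<Rightarrow> 'k::topological_space set \<Rightarrow> ('g \<Rightarrow> 'k \<Rightarrow> 'k) \<Rightarrow> bool" where
  "has_invariant_prob G K act \<longleftrightarrow>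
     (\<exists>\<mu>. borel_prob_on K \<mu> \<and> (\<forall>g\<in>carrier G. push act g \<mu> = \<mu>))"

definition diffuse :: "'k measure \<Rightarrow> bool" where
  "diffuse \<mu> \<longleftrightarrow> (\<forall>x\<in>space \<mu>. emeasure \<mu> {x} = 0)"

definition weak_star_diff_to_zero :: "'k::topological_space set \<Rightarrow> (nat \<Rightarrow> 'k measure) \<Rightarrow> (nat \<Rightarrow> 'k measure) \<Rightarrow> bool" where
  "weak_star_diff_to_zero K \<mu> \<nu> \<longleftrightarrow>
     (\<forall>f :: 'k \<Rightarrow> real. continuous_on K f \<longrightarrow>
        (\<lambda>n. (\<integral>x. f x \<partial>(\<mu> n)) - (\<integral>x. f x \<partial>(\<nu> n))) \<longlonglongrightarrow> 0)"

definition escapes :: "('g \<Rightarrow> 'x::topological_space \<Rightarrow> 'x) \<Rightarrow> (nat \<Rightarrow> 'g) \<Rightarrow> bool" where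
  "escapes act gs \<longleftrightarrow> (\<exists>x. \<forall>C. compact C \<longrightarrow> eventually (\<lambda>n. act (gs n) x \<notin> C) sequentially)"

text \<open>Compact metrizable spaces are represented (up to homeomorphism)
  as compact subsets of the Hilbert-cube-type space nat => real with the product topology,
  into which every compact metrizable space embeds.\<close>
definition properly_proximal :: "('g, 'b) monoid_scheme \<Rightarrow> ('g \<Rightarrow> 'x::topological_space \<Rightarrow> 'x) \<Rightarrow> bool" where
  "properly_proximal G act \<longleftrightarrow>
    (\<exists>(l::nat) (Ks :: nat \<Rightarrow> (nat \<Rightarrow> real) set) (acts :: nat \<Rightarrow> 'g \<Rightarrow> (nat \<Rightarrow> real) \<Rightarrow> (nat \<Rightarrow> real))
        (etas :: nat \<Rightarrow> (nat \<Rightarrow> real) measure).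
       (\<forall>i<l. compact_G_space G (Ks i) (acts i) \<and> \<not> has_invariant_prob G (Ks i) (acts i)
              \<and> borel_prob_on (Ks i) (etas i) \<and> diffuse (etas i)) \<and>
       (\<forall>gs. (\<forall>n. gs n \<in> carrier G) \<longrightarrow> escapes act gs \<longrightarrow>
          (\<exists>i<l. \<exists>\<sigma>. strict_mono \<sigma> \<and>
             (\<forall>h\<in>carrier G. weak_star_diff_to_zero (Ks i)
                (\<lambda>n. push (acts i) (gs (\<sigma> n)) (push (acts i) h (etas i)))
                (\<lambda>n. push (acts i) (gs (\<sigma> n)) (etas i))))))"

definition cantor_set :: "real set" where
  "cantor_set = range (\<lambda>d::nat \<Rightarrow> bool. \<Sum>n. (if d n then 2 else 0) / 3 ^ Suc n)"

end

theory Submission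
  imports Defs
begin


lemma compact_countable_dense:
  fixes K :: "'k::metric_space set"
  assumes "compact K"
  obtains D where "countable D" "D \<subseteq> K" "\<And>x e. x \<in> K \<Longrightarrow> e > 0 \<Longrightarrow> \<exists>d\<in>D. dist x d < e"
proof -
  have "\<exists>F. finite F \<and> F \<subseteq> K \<and> K \<subseteq> (\<Union>x\<in>F. ball x (1 / (Suc n)))" for n :: nat
  proof -
    have "K \<subseteq> (\<Union>x\<in>K. ball x (1 / Suc n))" by (auto intro!: bexI)
    then obtain C' where "C' \<subseteq> K" "finite C'" "K \<subseteq> (\<Union>x\<in>C'. ball x (1 / Suc n))"
      using compactE_image[OF assms, of K "\<lambda>x. ball x (1 / Suc n)"] by blast
    then show ?thesis by blast
  qed
  then obtain F where F: "\<And>n. finite (F n) \<and> F n \<subseteq> K \<and> K \<subseteq> (\<Union>x\<in>F n. ball x (1 / (Suc n)))"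
    by metis
  show ?thesis
  proof
    show "countable (\<Union>n. F n)" using F by (simp add: countable_finite)
    show "(\<Union>n. F n) \<subseteq> K" using F by auto
    fix x e assume x: "x \<in> K" and e: "(e::real) > 0"
    obtain n where n: "1 / Suc n < e" using e nat_approx_posE by blast
    then obtain y where "y \<in> F n" "x \<in> ball y (1 / Suc n)" using F x by blast
    then have "dist x y < e" using n by (simp add: dist_commute)
    then show "\<exists>d\<in>\<Union>n. F n. dist x d < e" using \<open>y \<in> F n\<close> by blast
  qed
qed

lemma compact_embedding:
  fixes K :: "'k::metric_space set"
  assumes "compact K"
  obtains e :: "'k \<Rightarrow> (nat \<Rightarrow> real)" where "continuous_on K e" "inj_on e K"
proof (cases "K = {}")
  case True then show ?thesis using that by auto
next
  case False
  obtain D where D: "countable D" "D \<subseteq> K" "\<And>x e. x \<in> K \<Longrightarrow> e > 0 \<Longrightarrow> \<exists>d\<in>D. dist x d < e"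
    using compact_countable_dense[OF assms] by blast
  have "D \<noteq> {}" using D(3)[of _ 1] False by auto
  define d where "d = from_nat_into D"
  have rd: "range d = D" unfolding d_def using \<open>D \<noteq> {}\<close> D(1) by (simp add: range_from_nat_into)
  define e where "e x = (\<lambda>i. dist x (d i))" for x
  show ?thesis
  proof
    show "continuous_on K e" unfolding e_def
      by (intro continuous_on_coordinatewise_then_product continuous_intros)
    show "inj_on e K"
    proof
      fix x y assume x: "x \<in> K" and y: "y \<in> K" and exy: "e x = e y"
      have "dist x y < \<epsilon>" if "\<epsilon> > 0" for \<epsilon>
      proof -
        have "\<epsilon>/2 > 0" using that by simp
        then obtain z where z: "z \<in> D" "dist x z < \<epsilon>/2" using D(3)[OF x] by blast
        then obtain i where i: "z = d i" using rd by auto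
        have "dist y z = dist x z" using fun_cong[OF exy, of i] i by (simp add: e_def)
        moreover have "dist z x = dist x z" "dist z y = dist y z" by (simp_all add: dist_commute)
        ultimately show ?thesis using z dist_triangle3[of x y z] by linarith
      qed
      then show "x = y" by (metis dist_pos_lt less_irrefl)
    qed
  qed
qed



definition cF :: "(nat \<Rightarrow> bool) \<Rightarrow> real" where
  "cF d = (\<Sum>n. (if d n then 2 else 0) / 3 ^ Suc n)"

lemma summable_geo3: "summable (\<lambda>n. 2 / (3::real) ^ Suc n)"
proof -
  have "summable (\<lambda>n. (2/3) * (1/3::real) ^ n)"
    by (intro summable_mult summable_geometric) auto
  then show ?thesis by (simp add: power_divide field_simps)
qed

lemma summable_cF: "summable (\<lambda>n. (if d n then 2 else 0) / (3::real) ^ Suc n)"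
  by (rule summable_comparison_test[OF _ summable_geo3]) auto

lemma suminf_geo3_shift: "(\<Sum>n. 2 / (3::real) ^ Suc (n + k)) = 1 / 3 ^ k"
proof -
  have "(\<lambda>n. (2 / 3 ^ Suc k) * (1/3::real) ^ n) sums ((2 / 3 ^ Suc k) * (1 / (1 - 1/3)))"
    by (intro sums_mult geometric_sums) auto
  moreover have "(\<lambda>n. (2 / 3 ^ Suc k) * (1/3::real) ^ n) = (\<lambda>n. 2 / (3::real) ^ Suc (n + k))"
    by (auto simp: power_add power_divide field_simps)
  moreover have "(2 / 3 ^ Suc k) * (1 / (1 - 1/3)) = 1 / (3::real) ^ k"
    by (simp add: field_simps)
  ultimately show ?thesis using sums_unique by metis
qed

lemma cF_less:
  assumes "\<And>n. n < k \<Longrightarrow> d n = d' n" "d k" "\<not> d' k"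
  shows "cF d' < cF d"
proof -
  define c where "c n = (if d n then 2 else 0) / (3::real) ^ Suc n - (if d' n then 2 else 0) / 3 ^ Suc n" for n
  have sc: "summable c" unfolding c_def by (intro summable_diff summable_cF)
  have eq: "cF d - cF d' = (\<Sum>n. c n)" unfolding c_def cF_def
    using suminf_diff[OF summable_cF[of d] summable_cF[of d']] by simp
  have "(\<Sum>n. c n) = (\<Sum>n. c (n + Suc k)) + (\<Sum>i<Suc k. c i)"
    by (rule suminf_split_initial_segment[OF sc])
  moreover have "(\<Sum>i<Suc k. c i) = 2 / 3 ^ Suc k"
  proof -
    have "(\<Sum>i<k. c i) = 0" using assms(1) by (auto simp: c_def intro!: sum.neutral)
    then show ?thesis using assms(2,3) by (simp add: c_def)
  qed
  moreover have "(\<Sum>n. c (n + Suc k)) \<ge> - (1 / 3 ^ Suc k)"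
  proof -
    have s1: "summable (\<lambda>n. c (n + Suc k))" by (rule summable_ignore_initial_segment[OF sc])
    have s2: "summable (\<lambda>n. 2 / (3::real) ^ Suc (n + Suc k))"
      by (rule summable_ignore_initial_segment[OF summable_geo3])
    have "(\<Sum>n. - (2 / (3::real) ^ Suc (n + Suc k))) \<le> (\<Sum>n. c (n + Suc k))"
      by (rule suminf_le[OF _ summable_minus[OF s2] s1]) (auto simp: c_def)
    moreover have "(\<Sum>n. - (2 / (3::real) ^ Suc (n + Suc k))) = - (1 / 3 ^ Suc k)"
      using suminf_minus[OF s2] suminf_geo3_shift[of "Suc k"] by simp
    ultimately show ?thesis by simp
  qed
  ultimately have "cF d - cF d' \<ge> 2 / 3 ^ Suc k - 1 / 3 ^ Suc k" using eq by linarith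
  moreover have "2 / 3 ^ Suc k - 1 / 3 ^ Suc k > (0::real)" by (simp add: field_simps)
  ultimately show ?thesis by linarith
qed

lemma cF_inj: "cF d = cF d' \<Longrightarrow> d = d'"
proof (rule ccontr)
  assume eq: "cF d = cF d'" and ne: "d \<noteq> d'"
  then obtain m where "d m \<noteq> d' m" by auto
  define k where "k = (LEAST m. d m \<noteq> d' m)"
  have k: "d k \<noteq> d' k" unfolding k_def by (rule LeastI) fact
  have lt: "\<And>n. n < k \<Longrightarrow> d n = d' n" unfolding k_def using not_less_Least by blast
  show False
  proof (cases "d k")
    case True
    then show False using cF_less[of k d d'] lt k eq by auto
  next
    case False
    then show False using cF_less[of k d' d] lt k eq by auto
  qed
qed

definition bits :: "real \<Rightarrow> nat \<Rightarrow> bool" where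
  "bits x n = odd \<lfloor>2 ^ Suc n * x\<rfloor>"

lemma floor_double: fixes y :: real shows "\<lfloor>2 * y\<rfloor> = 2 * \<lfloor>y\<rfloor> + (if odd \<lfloor>2 * y\<rfloor> then 1 else 0)"
proof -
  have a: "\<lfloor>2 * y\<rfloor> \<ge> 2 * \<lfloor>y\<rfloor>" by (metis floor_le_iff le_floor_iff of_int_mult of_int_numeral of_int_floor_le mult_left_mono zero_le_numeral)
  have b: "\<lfloor>2 * y\<rfloor> \<le> 2 * \<lfloor>y\<rfloor> + 1"
  proof -
    have "2 * y < 2 * \<lfloor>y\<rfloor> + 2" using real_of_int_floor_add_one_gt[of y] by linarith
    then show ?thesis by linarith
  qed
  from a b have "\<lfloor>2 * y\<rfloor> = 2 * \<lfloor>y\<rfloor> \<or> \<lfloor>2 * y\<rfloor> = 2 * \<lfloor>y\<rfloor> + 1" by linarith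
  then show ?thesis by auto
qed

lemma bits_floor:
  assumes "x \<in> {0..<1}" "y \<in> {0..<1}" "bits x = bits y"
  shows "\<lfloor>2 ^ n * x\<rfloor> = \<lfloor>2 ^ n * y\<rfloor>"
proof (induction n)
  case 0
  have "\<lfloor>x\<rfloor> = 0" "\<lfloor>y\<rfloor> = 0" using assms(1,2) by (simp_all add: floor_eq_iff)
  then show ?case by simp
next
  case (Suc n)
  have "\<lfloor>2 ^ Suc n * x\<rfloor> = 2 * \<lfloor>2 ^ n * x\<rfloor> + (if bits x n then 1 else 0)"
    using floor_double[of "2 ^ n * x"] by (simp add: bits_def mult.assoc)
  moreover have "\<lfloor>2 ^ Suc n * y\<rfloor> = 2 * \<lfloor>2 ^ n * y\<rfloor> + (if bits y n then 1 else 0)"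
    using floor_double[of "2 ^ n * y"] by (simp add: bits_def mult.assoc)
  ultimately show ?case using Suc assms(3) by simp
qed

lemma bits_inj:
  assumes "x \<in> {0..<1}" "y \<in> {0..<1}" "bits x = bits y"
  shows "x = y"
proof -
  have all: "\<bar>x - y\<bar> < 1 / 2 ^ n" for n :: nat
  proof -
    have f: "\<lfloor>2 ^ n * x\<rfloor> = \<lfloor>2 ^ n * y\<rfloor>" by (rule bits_floor[OF assms])
    have "\<bar>2 ^ n * x - 2 ^ n * y\<bar> < 1"
      using f real_of_int_floor_add_one_gt[of "2^n*x"] real_of_int_floor_add_one_gt[of "2^n*y"]
        of_int_floor_le[of "2^n*x"] of_int_floor_le[of "2^n*y"] by (smt (verit))
    then have "2 ^ n * \<bar>x - y\<bar> < 1" by (simp add: abs_mult right_diff_distrib[symmetric])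
    then show ?thesis by (simp add: field_simps)
  qed
  show ?thesis
  proof (rule ccontr)
    assume "x \<noteq> y"
    then have "\<bar>x - y\<bar> > 0" by simp
    then obtain n where "(1/2::real) ^ n < \<bar>x - y\<bar>"
      using real_arch_pow_inv[of "\<bar>x - y\<bar>" "1/2"] by auto
    then have "1 / 2 ^ n < \<bar>x - y\<bar>" by (simp add: power_one_over)
    then show False using all[of n] by simp
  qed
qed

definition Phi :: "real \<Rightarrow> real" where "Phi x = cF (bits x)"

lemma Phi_inj: "inj_on Phi {0..<1}"
  by (auto simp: inj_on_def Phi_def dest!: cF_inj intro: bits_inj)

lemma Phi_in: "Phi x \<in> cantor_set"
  by (simp add: Phi_def cF_def cantor_set_def)

lemma Phi_measurable: "Phi \<in> borel_measurable borel"
  unfolding Phi_def cF_def bits_def by measurable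



lemma meas_cont:
  assumes "continuous_on A f" "f ` A \<subseteq> B"
  shows "f \<in> measurable (restrict_space borel A) (restrict_space borel B)"
proof (rule measurable_restrict_space2)
  show "f \<in> space (restrict_space borel A) \<rightarrow> B" using assms(2) by (auto simp: space_restrict_space)
  show "f \<in> borel_measurable (restrict_space borel A)" using assms(1) borel_measurable_continuous_on_restrict by blast
qed

definition tr :: "('k \<Rightarrow> 'a) \<Rightarrow> ('a \<Rightarrow> 'k) \<Rightarrow> 'a set \<Rightarrow> ('g \<Rightarrow> 'k \<Rightarrow> 'k) \<Rightarrow> 'g \<Rightarrow> 'a \<Rightarrow> 'a" where
  "tr e e' K' actK g = (\<lambda>y\<in>K'. e (actK g (e' y)))"

lemma tr_e:
  assumes "homeomorphism K K' e e'" "x \<in> K"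
  shows "tr e e' K' actK g (e x) = e (actK g x)"
  using assms unfolding homeomorphism_def tr_def by auto

lemma transport_action:
  fixes K :: "'k::metric_space set" and K' :: "'a::metric_space set"
  assumes G: "group G" and cs: "compact_G_space G K actK" and hom: "homeomorphism K K' e e'"
  shows "compact_G_space G K' (tr e e' K' actK)"
proof -
  interpret ga: group_action G K actK using cs by (simp add: compact_G_space_def)
  have hk: "\<forall>x\<in>K. e' (e x) = x" "e ` K = K'" "continuous_on K e" "\<forall>y\<in>K'. e (e' y) = y"
    "e' ` K' = K" "continuous_on K' e'" using hom by (auto simp: homeomorphism_def)
  have inK: "actK g x \<in> K" if "g \<in> carrier G" "x \<in> K" for g x
    using ga.element_image that by blast
  let ?a = "tr e e' K' actK"
  have Bij: "?a g \<in> Bij K'" if g: "g \<in> carrier G" for g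
  proof -
    have "inj_on (?a g) K'"
    proof
      fix y1 y2 assume y: "y1 \<in> K'" "y2 \<in> K'" "?a g y1 = ?a g y2"
      then have "e (actK g (e' y1)) = e (actK g (e' y2))" by (simp add: tr_def)
      moreover have "e' y1 \<in> K" "e' y2 \<in> K" using y hk by auto
      ultimately have "actK g (e' y1) = actK g (e' y2)"
        using hom homeomorphism_apply1 inK g by metis
      then have "e' y1 = e' y2" using ga.inj_prop[OF g] \<open>e' y1 \<in> K\<close> \<open>e' y2 \<in> K\<close> by (meson inj_on_eq_iff)
      then show "y1 = y2" using y hk by metis
    qed
    moreover have "?a g ` K' = K'"
    proof
      show "?a g ` K' \<subseteq> K'" using hk inK g by (auto simp: tr_def)
      show "K' \<subseteq> ?a g ` K'"
      proof
        fix y assume "y \<in> K'"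
        then obtain x where x: "x \<in> K" "y = e x" using hk by auto
        then obtain z where z: "z \<in> K" "actK g z = x" using ga.surj_prop[OF g] by (metis imageE)
        have "?a g (e z) = y" using tr_e[OF hom z(1), of actK g] z x by simp
        moreover have "e z \<in> K'" using z hk by auto
        ultimately show "y \<in> ?a g ` K'" by blast
      qed
    qed
    ultimately show ?thesis by (simp add: Bij_def bij_betw_def tr_def)
  qed
  have mult: "?a (g1 \<otimes>\<^bsub>G\<^esub> g2) = ?a g1 \<otimes>\<^bsub>BijGroup K'\<^esub> ?a g2"
    if g: "g1 \<in> carrier G" "g2 \<in> carrier G" for g1 g2
  proof -
    have "?a g1 \<otimes>\<^bsub>BijGroup K'\<^esub> ?a g2 = compose K' (?a g1) (?a g2)"
      using Bij g by (simp add: BijGroup_def)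
    also have "\<dots> = ?a (g1 \<otimes>\<^bsub>G\<^esub> g2)"
    proof
      fix y show "compose K' (?a g1) (?a g2) y = ?a (g1 \<otimes>\<^bsub>G\<^esub> g2) y"
      proof (cases "y \<in> K'")
        case True
        then have "e' y \<in> K" using hk by auto
        moreover have "e (actK g2 (e' y)) \<in> K'" using hk(2) inK[OF g(2) \<open>e' y \<in> K\<close>] by blast
        ultimately show ?thesis using True g inK[of g2 "e' y"] hk ga.composition_rule[of "e' y" g1 g2]
          by (simp add: compose_def tr_def)
      next
        case False then show ?thesis by (simp add: compose_def tr_def)
      qed
    qed
    finally show ?thesis by simp
  qed
  have "group_action G K' ?a"
    unfolding group_action_def group_hom_def group_hom_axioms_def
    using G group_BijGroup[of K'] Bij mult by (auto simp: hom_def BijGroup_def)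
  moreover have "compact K'" using hk cs compact_continuous_image by (metis compact_G_space_def)
  moreover have "continuous_on K' (?a g)" if g: "g \<in> carrier G" for g
  proof -
    have c1: "continuous_on K (actK g)" using cs g by (simp add: compact_G_space_def)
    have "continuous_on K' (\<lambda>y. e (actK g (e' y)))"
    proof (rule continuous_on_compose2[OF hk(3)])
      show "continuous_on K' (\<lambda>y. actK g (e' y))"
        by (rule continuous_on_compose2[OF c1 hk(6)]) (use hk in auto)
      show "(\<lambda>y. actK g (e' y)) ` K' \<subseteq> K" using hk inK g by auto
    qed
    then show ?thesis by (rule continuous_on_cong[THEN iffD1, rotated 2]) (auto simp: tr_def)
  qed
  ultimately show ?thesis by (simp add: compact_G_space_def)
qed

lemma tr_meas:
  fixes K :: "'k::metric_space set" and K' :: "'a::metric_space set"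
  assumes G: "group G" and cs: "compact_G_space G K actK" and hom: "homeomorphism K K' e e'"
    and g: "g \<in> carrier G"
  shows "tr e e' K' actK g \<in> measurable (restrict_space borel K') (restrict_space borel K')"
proof -
  have cs': "compact_G_space G K' (tr e e' K' actK)" by (rule transport_action[OF G cs hom])
  then interpret group_action G K' "tr e e' K' actK" by (simp add: compact_G_space_def)
  show ?thesis
    using cs' g surj_prop[OF g] by (intro meas_cont) (auto simp: compact_G_space_def)
qed

lemma transport_noninv:
  fixes K :: "'k::metric_space set" and K' :: "'a::metric_space set"
  assumes G: "group G" and cs: "compact_G_space G K actK" and hom: "homeomorphism K K' e e'"
    and ni: "\<not> has_invariant_prob G K actK"
  shows "\<not> has_invariant_prob G K' (tr e e' K' actK)"
proof
  assume "has_invariant_prob G K' (tr e e' K' actK)"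
  then obtain \<nu> where nu: "borel_prob_on K' \<nu>" and inv: "\<forall>g\<in>carrier G. push (tr e e' K' actK) g \<nu> = \<nu>"
    by (auto simp: has_invariant_prob_def)
  interpret ga: group_action G K actK using cs by (simp add: compact_G_space_def)
  have hk: "\<forall>x\<in>K. e' (e x) = x" "e ` K = K'" "continuous_on K e" "\<forall>y\<in>K'. e (e' y) = y"
    "e' ` K' = K" "continuous_on K' e'" using hom by (auto simp: homeomorphism_def)
  interpret nu: prob_space \<nu> using nu by (simp add: borel_prob_on_def)
  have snu: "sets \<nu> = sets (restrict_space borel K')" "space \<nu> = K'" using nu by (auto simp: borel_prob_on_def)
  have me': "e' \<in> measurable \<nu> (restrict_space borel K)"
    using meas_cont[OF hk(6)] hk(5) measurable_cong_sets[OF snu(1) refl] by blast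
  define \<mu> where "\<mu> = distr \<nu> (restrict_space borel K) e'"
  have smu: "sets \<mu> = sets (restrict_space borel K)" "space \<mu> = K"
    by (auto simp: \<mu>_def space_restrict_space)
  have "borel_prob_on K \<mu>"
    unfolding borel_prob_on_def using nu.prob_space_distr[OF me'] smu by (simp add: \<mu>_def)
  moreover have "push actK g \<mu> = \<mu>" if g: "g \<in> carrier G" for g
  proof -
    have inK: "actK g x \<in> K" if "x \<in> K" for x using ga.element_image g that by blast
    have mg: "actK g \<in> measurable (restrict_space borel K) \<mu>"
      using meas_cont[of K "actK g" K] cs g inK measurable_cong_sets[OF refl smu(1)]
      by (auto simp: compact_G_space_def)
    have ma: "tr e e' K' actK g \<in> measurable \<nu> \<nu>"
      using tr_meas[OF G cs hom g] measurable_cong_sets[OF snu(1) snu(1)] by blast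
    have "push actK g \<mu> = distr (distr \<nu> (restrict_space borel K) e') \<mu> (actK g)"
      by (simp add: push_def \<mu>_def)
    also have "\<dots> = distr \<nu> \<mu> (actK g \<circ> e')"
      by (rule distr_distr[OF mg me'])
    also have "\<dots> = distr \<nu> (restrict_space borel K) (e' \<circ> tr e e' K' actK g)"
    proof (rule distr_cong[OF refl smu(1)])
      fix y assume "y \<in> space \<nu>"
      then have y: "y \<in> K'" using snu by simp
      then have "e' y \<in> K" using hk by auto
      then show "(actK g \<circ> e') y = (e' \<circ> tr e e' K' actK g) y"
        using y hk inK by (auto simp: tr_def)
    qed
    also have "\<dots> = distr (distr \<nu> \<nu> (tr e e' K' actK g)) (restrict_space borel K) e'"
      by (rule distr_distr[symmetric, OF me' ma])
    also have "\<dots> = \<mu>" using inv g by (simp add: push_def \<mu>_def)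
    finally show ?thesis .
  qed
  ultimately have "has_invariant_prob G K actK" by (auto simp: has_invariant_prob_def)
  then show False using ni by simp
qed



theorem lemma1p6:
  fixes G :: "('g, 'b) monoid_scheme"
    and actX :: "'g \<Rightarrow> 'x::metric_space \<Rightarrow> 'x"
    and K :: "'k::metric_space set"
    and actK :: "'g \<Rightarrow> 'k \<Rightarrow> 'k"
    and Kstar :: "'k set"
  assumes "group G"
    and "countable (carrier G)"
    and "proper_metric_space TYPE('x)"
    and "isometric_action G actX"
    and "compact_G_space G K actK"
    and "\<not> has_invariant_prob G K actK"
    and "Kstar \<subseteq> K" and "Kstar \<in> sets borel"
    and "\<forall>g\<in>carrier G. actK g ` Kstar \<subseteq> Kstar"
    and "\<exists>C. C \<subseteq> Kstar \<and> C \<in> sets borel \<and> C homeomorphic cantor_set"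
    and "\<forall>gs. (\<forall>n. gs n \<in> carrier G) \<longrightarrow> escapes actX gs \<longrightarrow>
           (\<exists>\<sigma> \<xi>m \<xi>p. strict_mono \<sigma> \<and> \<xi>m \<in> K \<and> \<xi>p \<in> K \<and>
              (\<forall>\<xi>\<in>Kstar - {\<xi>m}. (\<lambda>n. actK (gs (\<sigma> n)) \<xi>) \<longlonglongrightarrow> \<xi>p))"
  shows "properly_proximal G actX"
proof -
  note G = assms(1) and csK = assms(5) and ni = assms(6) and KsK = assms(7)
    and Kinv = assms(9) and dyn = assms(11)
  interpret ga: group_action G K actK using csK by (simp add: compact_G_space_def)
  have inK: "actK g x \<in> K" if "g \<in> carrier G" "x \<in> K" for g x using ga.element_image that by blast
  have cK: "compact K" using csK by (simp add: compact_G_space_def)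
  obtain e :: "'k \<Rightarrow> (nat \<Rightarrow> real)" where e: "continuous_on K e" "inj_on e K"
    using compact_embedding[OF cK] by blast
  define K' where "K' = e ` K"
  obtain e' where hom: "homeomorphism K K' e e'"
    using homeomorphism_compact[OF cK e(1) K'_def[symmetric] e(2)] by blast
  have hk: "\<forall>x\<in>K. e' (e x) = x" "e ` K = K'" "continuous_on K e" "\<forall>y\<in>K'. e (e' y) = y"
    "e' ` K' = K" "continuous_on K' e'" using hom by (auto simp: homeomorphism_def)
  define acts where "acts = tr e e' K' actK"
  have csK': "compact_G_space G K' acts" unfolding acts_def by (rule transport_action[OF G csK hom])
  have niK': "\<not> has_invariant_prob G K' acts" unfolding acts_def by (rule transport_noninv[OF G csK hom ni])
  interpret ga': group_action G K' acts using csK' by (simp add: compact_G_space_def)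
  have cK': "compact K'" using csK' by (simp add: compact_G_space_def)
  have inK': "acts g y \<in> K'" if "g \<in> carrier G" "y \<in> K'" for g y using ga'.element_image that by blast
  have macts: "acts g \<in> measurable (restrict_space borel K') (restrict_space borel K')" if "g \<in> carrier G" for g
    unfolding acts_def by (rule tr_meas[OF G csK hom that])
  have acts_e: "acts g (e x) = e (actK g x)" if "x \<in> K" for g x
    unfolding acts_def by (rule tr_e[OF hom that])
  obtain C where C: "C \<subseteq> Kstar" "C homeomorphic cantor_set" using assms(10) by blast
  obtain hC' hC where homC: "homeomorphism C cantor_set hC' hC" using C(2) homeomorphic_def by blast
  have hC: "continuous_on cantor_set hC" "hC ` cantor_set = C" "\<forall>y\<in>cantor_set. hC' (hC y) = y"
    using homC by (auto simp: homeomorphism_def)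
  have CK: "C \<subseteq> K" using C KsK by blast
  define psi where "psi x = e (hC (Phi x))" for x
  define U where "U = uniform_measure lborel {0..<1::real}"
  interpret U: prob_space U unfolding U_def by (rule prob_space_uniform_measure) auto
  have sU: "sets U = sets borel" "space U = UNIV" by (simp_all add: U_def)
  have mpsi: "psi \<in> measurable U (restrict_space borel K')"
  proof -
    have c: "continuous_on cantor_set (\<lambda>y. e (hC y))"
      by (rule continuous_on_compose2[OF hk(3) hC(1)]) (use hC CK in auto)
    have m1: "(\<lambda>y. e (hC y)) \<in> measurable (restrict_space borel cantor_set) (restrict_space borel K')"
      by (rule meas_cont[OF c]) (use hC CK K'_def in auto)
    have m2: "Phi \<in> measurable U (restrict_space borel cantor_set)"
      by (rule measurable_restrict_space2) (auto simp: sU Phi_in measurable_cong_sets[OF sU(1) refl] Phi_measurable)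
    show ?thesis unfolding psi_def using measurable_compose[OF m2 m1] .
  qed
  define eta where "eta = distr U (restrict_space borel K') psi"
  have seta: "sets eta = sets (restrict_space borel K')" "space eta = K'"
    by (simp_all add: eta_def space_restrict_space)
  have bp: "borel_prob_on K' eta"
    unfolding borel_prob_on_def using U.prob_space_distr[OF mpsi] seta by (simp add: eta_def)
  have Phi_hC: "hC (Phi x) \<in> C" for x using hC(2) Phi_in by blast
  have hCinj: "inj_on hC cantor_set" using hC(3) by (metis inj_on_inverseI)
  have subs: "\<exists>a. {x\<in>{0..<1}. P (hC (Phi x)) = q} \<subseteq> {a}"
    if inj: "inj_on P C" for P :: "'k \<Rightarrow> 'k" and q
  proof (cases "{x\<in>{0..<1}. P (hC (Phi x)) = q} = {}")
    case True then show ?thesis by auto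
  next
    case False
    then obtain x0 where x0: "x0 \<in> {0..<1}" "P (hC (Phi x0)) = q" by auto
    have "x = x0" if "x \<in> {0..<1}" "P (hC (Phi x)) = q" for x
    proof -
      have "hC (Phi x) = hC (Phi x0)" using inj Phi_hC that x0 by (metis inj_on_eq_iff)
      then have "Phi x = Phi x0" using hCinj Phi_in by (metis inj_on_eq_iff)
      then show ?thesis using Phi_inj that(1) x0(1) by (metis inj_on_eq_iff)
    qed
    then show ?thesis by blast
  qed
  have diff: "diffuse eta"
    unfolding diffuse_def
  proof
    fix p assume "p \<in> space eta"
    then have p: "p \<in> K'" using seta by simp
    have sing: "{p} \<in> sets (restrict_space borel K')"
      using p by (auto simp: sets_restrict_space intro!: image_eqI[where x="{p}"])
    have em: "emeasure eta {p} = emeasure U (psi -` {p} \<inter> space U)"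
      unfolding eta_def by (rule emeasure_distr[OF mpsi sing])
    have Bs: "psi -` {p} \<inter> space U \<in> sets lborel"
      using measurable_sets[OF mpsi sing] sU by simp
    obtain a where a: "{x\<in>{0..<1}. hC (Phi x) = e' p} \<subseteq> {a}"
      using subs[of "\<lambda>c. c" "e' p"] by auto
    have "{0..<1} \<inter> (psi -` {p} \<inter> space U) \<subseteq> {a}"
    proof
      fix x assume x: "x \<in> {0..<1} \<inter> (psi -` {p} \<inter> space U)"
      then have "e (hC (Phi x)) = p" by (simp add: psi_def)
      then have "hC (Phi x) = e' p" using hk(1) Phi_hC CK by (metis subsetD)
      then show "x \<in> {a}" using a x by blast
    qed
    then have "countable ({0..<1} \<inter> (psi -` {p} \<inter> space U))"
      by (rule countable_subset) simp
    then have "emeasure lborel ({0..<1} \<inter> (psi -` {p} \<inter> space U)) = 0"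
      by (rule emeasure_lborel_countable)
    then show "emeasure eta {p} = 0" using em Bs by (simp add: U_def)
  qed
  have key: "(\<lambda>n. \<integral>x. f (acts (gs n) (Q x)) \<partial>U) \<longlonglongrightarrow> f (e \<xi>p)"
    if f: "continuous_on K' f" and Q: "Q \<in> measurable U (restrict_space borel K')"
      and Qeq: "\<And>x. x \<in> {0..<1} \<Longrightarrow> Q x = e (P (hC (Phi x)))" and Pinj: "inj_on P C"
      and PS: "P ` C \<subseteq> Kstar" and gs: "\<And>n. gs n \<in> carrier G" and xip: "\<xi>p \<in> K"
      and conv: "\<forall>\<xi>\<in>Kstar - {\<xi>m}. (\<lambda>n. actK (gs n) \<xi>) \<longlonglongrightarrow> \<xi>p"
    for f :: "(nat \<Rightarrow> real) \<Rightarrow> real" and Q P gs \<xi>m \<xi>p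
  proof -
    have "bounded (f ` K')" by (rule compact_imp_bounded[OF compact_continuous_image[OF f cK']])
    then obtain B where B: "\<And>y. y \<in> K' \<Longrightarrow> norm (f y) \<le> B" unfolding bounded_iff by blast
    have Qin: "Q x \<in> K'" for x using measurable_space[OF Q, of x] by (simp add: sU space_restrict_space)
    have fm: "f \<in> borel_measurable (restrict_space borel K')"
      by (rule borel_measurable_continuous_on_restrict[OF f])
    have sm: "(\<lambda>x. f (acts (gs n) (Q x))) \<in> borel_measurable U" for n
      using measurable_compose[OF measurable_compose[OF Q macts[OF gs]] fm] .
    obtain a where a: "{x\<in>{0..<1}. P (hC (Phi x)) = \<xi>m} \<subseteq> {a}" using subs[OF Pinj] by blast
    have ae: "AE x in U. (\<lambda>n. f (acts (gs n) (Q x))) \<longlonglongrightarrow> f (e \<xi>p)"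
    proof (rule AE_I')
      have cnt: "countable ({0..<1} \<inter> (- {0..<1} \<union> {a}))"
        by (rule countable_subset[of _ "{a}"]) auto
      have "emeasure U (- {0..<1} \<union> {a}) = 0"
        using emeasure_lborel_countable[OF cnt] by (simp add: U_def)
      then show "(- {0..<1} \<union> {a}) \<in> null_sets U" by (simp add: null_sets_def sU)
      show "{x \<in> space U. \<not> (\<lambda>n. f (acts (gs n) (Q x))) \<longlonglongrightarrow> f (e \<xi>p)} \<subseteq> - {0..<1} \<union> {a}"
      proof (rule subsetI, rule ccontr)
        fix x assume x: "x \<in> {x \<in> space U. \<not> (\<lambda>n. f (acts (gs n) (Q x))) \<longlonglongrightarrow> f (e \<xi>p)}"
          and nx: "x \<notin> - {0..<1} \<union> {a}"
        then have x01: "x \<in> {0..<1}" and xa: "x \<noteq> a" by auto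
        define c where "c = P (hC (Phi x))"
        have cm: "c \<noteq> \<xi>m" using a x01 xa by (auto simp: c_def)
        have cS: "c \<in> Kstar" using PS Phi_hC by (auto simp: c_def)
        then have cKK: "c \<in> K" using KsK by blast
        have t1: "(\<lambda>n. actK (gs n) c) \<longlonglongrightarrow> \<xi>p" using conv cS cm by blast
        have t2: "(\<lambda>n. e (actK (gs n) c)) \<longlonglongrightarrow> e \<xi>p"
          by (rule continuous_on_tendsto_compose[OF hk(3) t1 xip]) (use inK gs cKK in auto)
        have t3: "(\<lambda>n. f (e (actK (gs n) c))) \<longlonglongrightarrow> f (e \<xi>p)"
          by (rule continuous_on_tendsto_compose[OF f t2]) (use inK gs cKK xip hk(2) in auto)
        have "f (acts (gs n) (Q x)) = f (e (actK (gs n) c))" for n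
          using Qeq[OF x01] acts_e[OF cKK] by (simp add: c_def)
        then show False using t3 x by simp
      qed
    qed
    have "(\<lambda>n. \<integral>x. f (acts (gs n) (Q x)) \<partial>U) \<longlonglongrightarrow> (\<integral>x. f (e \<xi>p) \<partial>U)"
    proof (rule integral_dominated_convergence[where M=U and w="\<lambda>_. B" and s="\<lambda>i x. f (acts (gs i) (Q x))" and f="\<lambda>x. f (e \<xi>p)"])
      show "(\<lambda>x. f (e \<xi>p)) \<in> borel_measurable U" by simp
      show "\<And>i. (\<lambda>x. f (acts (gs i) (Q x))) \<in> borel_measurable U" by (rule sm)
      show "integrable U (\<lambda>_. B)" by simp
      show "AE x in U. (\<lambda>i. f (acts (gs i) (Q x))) \<longlonglongrightarrow> f (e \<xi>p)" by (rule ae)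
      show "\<And>i. AE x in U. norm (f (acts (gs i) (Q x))) \<le> B"
        using B inK' gs Qin by (intro AE_I2) blast
    qed
    then show ?thesis using U.prob_space by simp
  qed
  have int_push: "integral\<^sup>L (push acts g M) f = (\<integral>y. f (acts g y) \<partial>M)"
    if M: "sets M = sets (restrict_space borel K')" and g: "g \<in> carrier G" and f: "continuous_on K' f" for M g and f :: "(nat \<Rightarrow> real) \<Rightarrow> real"
  proof -
    have ma: "acts g \<in> measurable M M" using macts[OF g] measurable_cong_sets[OF M M] by blast
    have fm: "f \<in> borel_measurable M"
      using borel_measurable_continuous_on_restrict[OF f] measurable_cong_sets[OF M refl] by blast
    show ?thesis unfolding push_def by (rule integral_distr[OF ma fm])
  qed
  have spush: "sets (push acts h eta) = sets (restrict_space borel K')" for h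
    by (simp add: push_def seta)
  show ?thesis unfolding properly_proximal_def
  proof (rule exI[of _ "1::nat"], rule exI[of _ "\<lambda>_. K'"], rule exI[of _ "\<lambda>_. acts"], rule exI[of _ "\<lambda>_. eta"], rule conjI)
    show "\<forall>i<1::nat. compact_G_space G K' acts \<and> \<not> has_invariant_prob G K' acts \<and> borel_prob_on K' eta \<and> diffuse eta"
      using csK' niK' bp diff by auto
  next
    show "\<forall>gs. (\<forall>n. gs n \<in> carrier G) \<longrightarrow> escapes actX gs \<longrightarrow>
          (\<exists>i<1::nat. \<exists>\<sigma>. strict_mono \<sigma> \<and>
             (\<forall>h\<in>carrier G. weak_star_diff_to_zero K'
                (\<lambda>n. push acts (gs (\<sigma> n)) (push acts h eta))
                (\<lambda>n. push acts (gs (\<sigma> n)) eta)))"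
    proof (intro allI impI)
    fix gs assume gs: "\<forall>n. gs n \<in> carrier G" "escapes actX gs"
    obtain \<sigma> \<xi>m \<xi>p where sig: "strict_mono \<sigma>" "\<xi>m \<in> K" "\<xi>p \<in> K"
      "\<forall>\<xi>\<in>Kstar - {\<xi>m}. (\<lambda>n. actK (gs (\<sigma> n)) \<xi>) \<longlonglongrightarrow> \<xi>p"
      using mp[OF mp[OF spec[OF dyn, of gs] gs(1)] gs(2)] by blast
    have gs': "\<And>n. gs (\<sigma> n) \<in> carrier G" using gs by blast
    have W: "\<forall>h\<in>carrier G. weak_star_diff_to_zero K'
                (\<lambda>n. push acts (gs (\<sigma> n)) (push acts h eta))
                (\<lambda>n. push acts (gs (\<sigma> n)) eta)"
    proof (intro ballI, unfold weak_star_diff_to_zero_def, intro allI impI)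
      fix h and f :: "(nat \<Rightarrow> real) \<Rightarrow> real" assume h: "h \<in> carrier G" and f: "continuous_on K' f"
      have fm: "(\<lambda>y. f (acts g (acts h y))) \<in> borel_measurable (restrict_space borel K')" if g: "g \<in> carrier G" for g
        using measurable_compose[OF measurable_compose[OF macts[OF h] macts[OF g]] borel_measurable_continuous_on_restrict[OF f]] .
      have fm2: "(\<lambda>y. f (acts g y)) \<in> borel_measurable (restrict_space borel K')" if g: "g \<in> carrier G" for g
        using measurable_compose[OF macts[OF g] borel_measurable_continuous_on_restrict[OF f]] .
      have i1: "integral\<^sup>L (push acts (gs (\<sigma> n)) (push acts h eta)) f
          = (\<integral>x. f (acts (gs (\<sigma> n)) (acts h (psi x))) \<partial>U)" for n
      proof -
        have "integral\<^sup>L (push acts (gs (\<sigma> n)) (push acts h eta)) f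
            = (\<integral>y. f (acts (gs (\<sigma> n)) y) \<partial>(push acts h eta))"
          by (rule int_push[OF spush gs' f])
        also have "\<dots> = (\<integral>y. f (acts (gs (\<sigma> n)) (acts h y)) \<partial>eta)"
        proof (rule int_push[OF seta(1) h])
          show "continuous_on K' (\<lambda>y. f (acts (gs (\<sigma> n)) y))"
          proof (rule continuous_on_compose2[OF f])
            show "continuous_on K' (acts (gs (\<sigma> n)))" using csK' gs'[of n] by (simp add: compact_G_space_def)
            show "acts (gs (\<sigma> n)) ` K' \<subseteq> K'" using inK' gs'[of n] by blast
          qed
        qed
        also have "\<dots> = (\<integral>x. f (acts (gs (\<sigma> n)) (acts h (psi x))) \<partial>U)"
          unfolding eta_def by (rule integral_distr[OF mpsi fm[OF gs']])
        finally show ?thesis .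
      qed
      have i2: "integral\<^sup>L (push acts (gs (\<sigma> n)) eta) f = (\<integral>x. f (acts (gs (\<sigma> n)) (psi x)) \<partial>U)" for n
      proof -
        have "integral\<^sup>L (push acts (gs (\<sigma> n)) eta) f = (\<integral>y. f (acts (gs (\<sigma> n)) y) \<partial>eta)"
          by (rule int_push[OF seta(1) gs' f])
        also have "\<dots> = (\<integral>x. f (acts (gs (\<sigma> n)) (psi x)) \<partial>U)"
          unfolding eta_def by (rule integral_distr[OF mpsi fm2[OF gs']])
        finally show ?thesis .
      qed
      have Qm: "(\<lambda>x. acts h (psi x)) \<in> measurable U (restrict_space borel K')"
        using measurable_compose[OF mpsi macts[OF h]] .
      have Qeq: "\<And>x. x \<in> {0..<1} \<Longrightarrow> acts h (psi x) = e (actK h (hC (Phi x)))"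
        unfolding psi_def using acts_e Phi_hC CK by blast
      have Pinj: "inj_on (actK h) C" using ga.inj_prop[OF h] CK inj_on_subset by blast
      have PS: "actK h ` C \<subseteq> Kstar" using Kinv h C(1) by blast
      have L1: "(\<lambda>n. \<integral>x. f (acts (gs (\<sigma> n)) (acts h (psi x))) \<partial>U) \<longlonglongrightarrow> f (e \<xi>p)"
        by (rule key[OF f Qm Qeq Pinj PS gs' sig(3) sig(4)])
      have Qeq2: "\<And>x. x \<in> {0..<1} \<Longrightarrow> psi x = e ((\<lambda>c. c) (hC (Phi x)))"
        by (simp add: psi_def)
      have Pinj2: "inj_on (\<lambda>c. c) C" by simp
      have PS2: "(\<lambda>c. c) ` C \<subseteq> Kstar" using C(1) by simp
      have L2: "(\<lambda>n. \<integral>x. f (acts (gs (\<sigma> n)) (psi x)) \<partial>U) \<longlonglongrightarrow> f (e \<xi>p)"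
        by (rule key[OF f mpsi Qeq2 Pinj2 PS2 gs' sig(3) sig(4)])
      show "(\<lambda>n. integral\<^sup>L (push acts (gs (\<sigma> n)) (push acts h eta)) f
              - integral\<^sup>L (push acts (gs (\<sigma> n)) eta) f) \<longlonglongrightarrow> 0"
        unfolding i1 i2 using tendsto_diff[OF L1 L2] by simp
    qed
    then show "\<exists>i<1::nat. \<exists>\<sigma>. strict_mono \<sigma> \<and> (\<forall>h\<in>carrier G. weak_star_diff_to_zero K'
                (\<lambda>n. push acts (gs (\<sigma> n)) (push acts h eta))
                (\<lambda>n. push acts (gs (\<sigma> n)) eta))"
    proof -
      have W2: "\<exists>\<sigma>'. strict_mono \<sigma>' \<and> (\<forall>h\<in>carrier G. weak_star_diff_to_zero K'
                (\<lambda>n. push acts (gs (\<sigma>' n)) (push acts h eta))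
                (\<lambda>n. push acts (gs (\<sigma>' n)) eta))"
        by (rule exI[of _ \<sigma>], rule conjI[OF sig(1) W])
      show ?thesis by (rule exI[of _ "0::nat"], rule conjI[OF zero_less_one W2])
    qed
    qed
  qed
qed

end
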